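(* Let $n\ge 2$ be an integer and let $M$ be a countable dense subset of $(L_n,\tau_E|_{L_n})$. Then (1) $(X_n,\tau(M))$ is neither perfect nor Lindelöf; (2) $(X_n,\tau(L_n\setminus M))$ is second-countable but not $\sigma$-compact.
   Context: For $\overline{x},\overline{a}\in\mathbb R^n$ let $|\overline{x}-\overline{a}|$ be the Euclidean distance and $B(\overline{a},\epsilon)=\{\overline{x}\in\mathbb R^n:|\overline{x}-\overline{a}|<\epsilon\}$. Let $P_n=\{\overline{x}\in\mathbb R^n: x_n>0\}$, $L_n=\{\overline{x}\in\mathbb R^n: x_n=0\}$, $X_n=P_n\cup L_n$, and let $\tau_E$ denote the Euclidean topology on $X_n$. For $\overline{a}\in L_n$ and $\epsilon>0$ put $\overline{a(\epsilon)}=(a_1,\dots,a_{n-1},\epsilon)$ and $\tilde B(\overline{a},\epsilon)=\{\overline{a}\}\cup B(\overline{a(\epsilon)},\epsilon)$. For $A\subseteq L_n$, the topology $\tau(A)$ on $X_n$ is generated by the local bases: at $\overline{a}\in P_n$, the sets $B(\overline{a},\epsilon)$ with $0<\epsilon<a_n$; at $\overline{a}\in A$, the sets $B(\overline{a},\epsilon)\cap X_n$ with $\epsilon>0$; at $\overline{a}\in L_n\setminus A$, the sets $\tilde B(\overline{a},\epsilon)$ with $\epsilon>0$. A space is perfect if every closed set is a $G_\delta$-set. *)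

theory Defs
  imports "HOL-Analysis.Analysis"
begin

(* R^n is represented as R^(n-1) x R, i.e. the type (real^'m) \<times> real with
   n - 1 = CARD('m) \<ge> 1 (so n \<ge> 2).  The norm on the product type is
   sqrt(|y|^2 + t^2), i.e. the Euclidean norm; the last coordinate x_n is snd. *)

definition Pn :: "((real^'m) \<times> real) set" where
  "Pn = {x. snd x > 0}"

definition Ln :: "((real^'m) \<times> real) set" where
  "Ln = {x. snd x = 0}"

definition Xn :: "((real^'m) \<times> real) set" where
  "Xn = Pn \<union> Ln"

definition tball :: "(real^'m) \<times> real \<Rightarrow> real \<Rightarrow> ((real^'m) \<times> real) set" where
  "tball a e = insert a (ball (fst a, e) e)"

definition basic_nbhd :: "((real^'m) \<times> real) set \<Rightarrow> (real^'m) \<times> real \<Rightarrow> ((real^'m) \<times> real) set \<Rightarrow> bool" where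
  "basic_nbhd A a N \<longleftrightarrow>
     (a \<in> Pn \<and> (\<exists>e. 0 < e \<and> e < snd a \<and> N = ball a e)) \<or>
     (a \<in> A \<and> (\<exists>e>0. N = ball a e \<inter> Xn)) \<or>
     (a \<in> Ln - A \<and> (\<exists>e>0. N = tball a e))"

definition tau :: "((real^'m) \<times> real) set \<Rightarrow> ((real^'m) \<times> real) topology" where
  "tau A = topology (\<lambda>U. U \<subseteq> Xn \<and> (\<forall>a\<in>U. \<exists>N. basic_nbhd A a N \<and> N \<subseteq> U))"

definition perfect_top :: "'a topology \<Rightarrow> bool" where
  "perfect_top X \<longleftrightarrow> (\<forall>C. closedin X C \<longrightarrow> gdelta_in X C)"

definition sigma_compact_top :: "'a topology \<Rightarrow> bool" where
  "sigma_compact_top X \<longleftrightarrow>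
     (\<exists>\<F>. countable \<F> \<and> (\<forall>K\<in>\<F>. compactin X K) \<and> \<Union>\<F> = topspace X)"

end

theory Submission
  imports Defs
begin


lemma tball_mono: "e \<le> e' \<Longrightarrow> tball a e \<subseteq> tball a e'"
proof
  fix y assume le: "e \<le> e'" and y: "y \<in> tball a e"
  show "y \<in> tball a e'"
  proof (cases "y = a")
    case False
    then have "dist y (fst a, e) < e" using y by (auto simp: tball_def dist_commute)
    moreover have "dist (fst a, e) (fst a, e') = e' - e" using le by (simp add: dist_Pair_Pair dist_real_def)
    ultimately have "dist y (fst a, e') < e'" using dist_triangle[of y "(fst a, e')" "(fst a, e)"] by linarith
    then show ?thesis by (simp add: tball_def dist_commute)
  qed (simp add: tball_def)
qed

lemma snd_pos_ball: "dist y (c, e) < e \<Longrightarrow> snd y > 0"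
  using dist_snd_le[of y "(c,e)"] by (simp add: dist_real_def)

lemma a_in_tball: "a \<in> tball a e" by (simp add: tball_def)

lemma tball_other: "y \<in> tball a e \<Longrightarrow> y \<noteq> a \<Longrightarrow> snd y > 0"
  by (rule snd_pos_ball[of y "fst a" e]) (simp add: tball_def dist_commute)

lemma PL_disj: "Pn \<inter> Ln = {}" by (auto simp: Pn_def Ln_def)

lemma tball_Ln: "tball a e \<inter> Ln \<subseteq> {a}"
proof
  fix y assume y: "y \<in> tball a e \<inter> Ln"
  show "y \<in> {a}"
  proof (rule ccontr)
    assume "y \<notin> {a}"
    then have "snd y > 0" using y tball_other by blast
    then show False using y by (simp add: Ln_def)
  qed
qed

lemma tball_sub_Xn: "a \<in> Ln \<Longrightarrow> tball a e \<subseteq> Xn"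
proof
  fix y assume a: "a \<in> Ln" and y: "y \<in> tball a e"
  show "y \<in> Xn"
  proof (cases "y = a")
    case True then show ?thesis using a by (simp add: Xn_def)
  next
    case False then have "snd y > 0" using y tball_other by blast
    then show ?thesis by (simp add: Xn_def Pn_def)
  qed
qed

lemma ball_Pn: "a \<in> Pn \<Longrightarrow> e \<le> snd a \<Longrightarrow> ball a e \<subseteq> Pn"
proof
  fix y assume "a \<in> Pn" "e \<le> snd a" "y \<in> ball a e"
  then show "y \<in> Pn" using dist_snd_le[of a y] by (auto simp: Pn_def dist_real_def)
qed

lemma basic_Pn: "a \<in> Pn \<Longrightarrow> A \<subseteq> Ln \<Longrightarrow> basic_nbhd A a N \<longleftrightarrow> (\<exists>e. 0 < e \<and> e < snd a \<and> N = ball a e)"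
  unfolding basic_nbhd_def using PL_disj by blast

lemma basic_A: "a \<in> A \<Longrightarrow> A \<subseteq> Ln \<Longrightarrow> basic_nbhd A a N \<longleftrightarrow> (\<exists>e>0. N = ball a e \<inter> Xn)"
  unfolding basic_nbhd_def using PL_disj by blast

lemma basic_L: "a \<in> Ln - A \<Longrightarrow> basic_nbhd A a N \<longleftrightarrow> (\<exists>e>0. N = tball a e)"
  unfolding basic_nbhd_def using PL_disj by blast

lemma Xn_cases: assumes "a \<in> Xn" obtains "a \<in> Pn" | "a \<in> A" | "a \<in> Ln - A"
  using assms unfolding Xn_def by blast

lemma basic_sub: assumes "basic_nbhd A a N" "A \<subseteq> Ln" shows "a \<in> N \<and> N \<subseteq> Xn"
  using assms(1) unfolding basic_nbhd_def
proof (elim disjE conjE exE)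
  fix e assume "a \<in> Pn" "0<e" "e<snd a" "N = ball a e"
  then show ?thesis using ball_Pn[of a e] by (auto simp: Xn_def)
next
  fix e assume "a \<in> A" "0<e" "N = ball a e \<inter> Xn"
  then show ?thesis using assms(2) by (auto simp: Xn_def)
next
  fix e assume "a \<in> Ln - A" "0<e" "N = tball a e"
  then show ?thesis using tball_sub_Xn[of a e] a_in_tball[of a e] by auto
qed

lemma basic_int: assumes A: "A \<subseteq> Ln" and "basic_nbhd A a N1" "basic_nbhd A a N2"
  shows "\<exists>N. basic_nbhd A a N \<and> N \<subseteq> N1 \<inter> N2"
proof -
  have "a \<in> Xn" using basic_sub[OF assms(2) A] by blast
  then show ?thesis
  proof (cases rule: Xn_cases[where A=A])
    case 1
    obtain e1 where "0<e1" "e1 < snd a" "N1 = ball a e1" using assms(2) basic_Pn[OF 1 A] by blast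
    moreover obtain e2 where "0<e2" "e2 < snd a" "N2 = ball a e2" using assms(3) basic_Pn[OF 1 A] by blast
    ultimately have "basic_nbhd A a (ball a (min e1 e2))" "ball a (min e1 e2) \<subseteq> N1 \<inter> N2"
      unfolding basic_Pn[OF 1 A] by (auto intro!: exI[of _ "min e1 e2"])
    then show ?thesis by blast
  next
    case 2
    obtain e1 where "0<e1" "N1 = ball a e1 \<inter> Xn" using assms(2) basic_A[OF 2 A] by blast
    moreover obtain e2 where "0<e2" "N2 = ball a e2 \<inter> Xn" using assms(3) basic_A[OF 2 A] by blast
    ultimately have "basic_nbhd A a (ball a (min e1 e2) \<inter> Xn)" "ball a (min e1 e2) \<inter> Xn \<subseteq> N1 \<inter> N2"
      unfolding basic_A[OF 2 A] by (auto intro!: exI[of _ "min e1 e2"])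
    then show ?thesis by blast
  next
    case 3
    obtain e1 where "0<e1" "N1 = tball a e1" using assms(2) basic_L[OF 3] by blast
    moreover obtain e2 where "0<e2" "N2 = tball a e2" using assms(3) basic_L[OF 3] by blast
    moreover have "tball a (min e1 e2) \<subseteq> tball a e1" "tball a (min e1 e2) \<subseteq> tball a e2"
      by (simp_all add: tball_mono)
    ultimately have "basic_nbhd A a (tball a (min e1 e2))" "tball a (min e1 e2) \<subseteq> N1 \<inter> N2"
      unfolding basic_L[OF 3] by (auto intro!: exI[of _ "min e1 e2"])
    then show ?thesis by blast
  qed
qed

lemma istop_tau: assumes "A \<subseteq> Ln"
  shows "istopology (\<lambda>U. U \<subseteq> Xn \<and> (\<forall>a\<in>U. \<exists>N. basic_nbhd A a N \<and> N \<subseteq> U))"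
  unfolding istopology_def
proof (rule conjI; intro allI impI)
  fix S T :: "((real^'a) \<times> real) set"
  assume S: "S \<subseteq> Xn \<and> (\<forall>a\<in>S. \<exists>N. basic_nbhd A a N \<and> N \<subseteq> S)"
    and T: "T \<subseteq> Xn \<and> (\<forall>a\<in>T. \<exists>N. basic_nbhd A a N \<and> N \<subseteq> T)"
  show "S \<inter> T \<subseteq> Xn \<and> (\<forall>a\<in>S \<inter> T. \<exists>N. basic_nbhd A a N \<and> N \<subseteq> S \<inter> T)"
  proof (intro conjI ballI)
    show "S \<inter> T \<subseteq> Xn" using S by auto
    fix a assume a: "a \<in> S \<inter> T"
    obtain N1 where N1: "basic_nbhd A a N1" "N1 \<subseteq> S" using S a by blast
    obtain N2 where N2: "basic_nbhd A a N2" "N2 \<subseteq> T" using T a by blast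
    obtain N where "basic_nbhd A a N" "N \<subseteq> N1 \<inter> N2" using basic_int[OF assms N1(1) N2(1)] by blast
    then show "\<exists>N. basic_nbhd A a N \<and> N \<subseteq> S \<inter> T" using N1 N2 by blast
  qed
next
  fix K :: "((real^'a) \<times> real) set set"
  assume K: "\<forall>S\<in>K. S \<subseteq> Xn \<and> (\<forall>a\<in>S. \<exists>N. basic_nbhd A a N \<and> N \<subseteq> S)"
  show "\<Union>K \<subseteq> Xn \<and> (\<forall>a\<in>\<Union>K. \<exists>N. basic_nbhd A a N \<and> N \<subseteq> \<Union>K)"
  proof (intro conjI ballI)
    show "\<Union>K \<subseteq> Xn" using K by blast
    fix a assume "a \<in> \<Union>K"
    then obtain S where S: "S \<in> K" "a \<in> S" by blast
    then obtain N where "basic_nbhd A a N" "N \<subseteq> S" using K by blast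
    then show "\<exists>N. basic_nbhd A a N \<and> N \<subseteq> \<Union>K" using S by blast
  qed
qed

lemma openin_tau: assumes "A \<subseteq> Ln"
  shows "openin (tau A) U \<longleftrightarrow> U \<subseteq> Xn \<and> (\<forall>a\<in>U. \<exists>N. basic_nbhd A a N \<and> N \<subseteq> U)"
  by (simp add: tau_def topology_inverse'[OF istop_tau[OF assms]])

lemma exists_basic: assumes A: "A \<subseteq> Ln" and a: "a \<in> Xn" shows "\<exists>N. basic_nbhd A a N"
  using a
proof (cases rule: Xn_cases[where A=A])
  case 1
  then have "0 < snd a / 2" "snd a / 2 < snd a" by (auto simp: Pn_def)
  then have "basic_nbhd A a (ball a (snd a / 2))" using basic_Pn[OF 1 A] by blast
  then show ?thesis by blast
next
  case 2
  have "basic_nbhd A a (ball a 1 \<inter> Xn)" unfolding basic_A[OF 2 A] by (auto intro!: exI[of _ 1])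
  then show ?thesis by blast
next
  case 3
  have "basic_nbhd A a (tball a 1)" unfolding basic_L[OF 3] by (auto intro!: exI[of _ 1])
  then show ?thesis by blast
qed

lemma topspace_tau: assumes A: "A \<subseteq> Ln" shows "topspace (tau A) = Xn"
proof -
  have X: "openin (tau A) Xn" unfolding openin_tau[OF A]
  proof (intro conjI ballI)
    show "Xn \<subseteq> Xn" by simp
    fix a :: "(real^'a) \<times> real" assume "a \<in> Xn"
    then obtain N where "basic_nbhd A a N" using exists_basic[OF A] by blast
    then show "\<exists>N. basic_nbhd A a N \<and> N \<subseteq> Xn" using basic_sub[OF _ A] by blast
  qed
  have "topspace (tau A) \<subseteq> Xn" using openin_topspace[of "tau A"] unfolding openin_tau[OF A] by blast
  moreover have "Xn \<subseteq> topspace (tau A)" using openin_subset[OF X] .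
  ultimately show ?thesis by blast
qed


lemma tball_sub_ball: assumes "a \<in> Ln" "e > 0" shows "tball a e \<subseteq> ball a (2*e)"
proof
  fix y assume y: "y \<in> tball a e"
  show "y \<in> ball a (2*e)"
  proof (cases "y = a")
    case False
    then have "dist y (fst a, e) < e" using y by (auto simp: tball_def dist_commute)
    moreover have "dist (fst a, e) a = e" using assms
      by (cases a) (simp add: Ln_def dist_Pair_Pair dist_real_def)
    ultimately show ?thesis using dist_triangle[of y a "(fst a, e)"] by (simp add: dist_commute)
  qed (simp add: assms)
qed

lemma open_Int_Xn_tau: assumes A: "A \<subseteq> Ln" and C: "open C" shows "openin (tau A) (C \<inter> Xn)"
  unfolding openin_tau[OF A]
proof (intro conjI ballI)
  show "C \<inter> Xn \<subseteq> Xn" by auto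
  fix a assume a: "a \<in> C \<inter> Xn"
  then obtain e where e: "e > 0" "ball a e \<subseteq> C" using C open_contains_ball by blast
  have "a \<in> Pn \<or> a \<in> A \<or> a \<in> Ln - A" using a by (auto simp: Xn_def)
  then show "\<exists>N. basic_nbhd A a N \<and> N \<subseteq> C \<inter> Xn"
  proof (elim disjE)
    assume P: "a \<in> Pn"
    define r where "r = min e (snd a) / 2"
    have r: "0 < r" "r < snd a" "r \<le> e" using P e by (auto simp: r_def Pn_def)
    have "ball a r \<subseteq> C \<inter> Xn" using e r ball_Pn[OF P, of r] by (auto simp: Xn_def)
    moreover have "basic_nbhd A a (ball a r)" using P r unfolding basic_nbhd_def by blast
    ultimately show ?thesis by blast
  next
    assume "a \<in> A"
    then have "basic_nbhd A a (ball a e \<inter> Xn)" using e unfolding basic_nbhd_def by blast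
    then show ?thesis using e by blast
  next
    assume L: "a \<in> Ln - A"
    have "tball a (e/2) \<subseteq> ball a e" using tball_sub_ball[of a "e/2"] L e by auto
    moreover have "tball a (e/2) \<subseteq> Xn" using tball_sub_Xn[of a "e/2"] L by blast
    moreover have "basic_nbhd A a (tball a (e/2))" using L e unfolding basic_nbhd_def
      by (intro disjI2 conjI exI[of _ "e/2"]) auto
    ultimately show ?thesis using e by blast
  qed
qed

lemma open_tball: assumes A: "A \<subseteq> Ln" and a: "a \<in> Ln - A" and e: "e > 0"
  shows "openin (tau A) (tball a e)"
  unfolding openin_tau[OF A]
proof (intro conjI ballI)
  show "tball a e \<subseteq> Xn" using tball_sub_Xn[of a e] a by blast
  fix y assume y: "y \<in> tball a e"
  show "\<exists>N. basic_nbhd A y N \<and> N \<subseteq> tball a e"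
  proof (cases "y = a")
    case True
    then show ?thesis using a e unfolding basic_nbhd_def by blast
  next
    case False
    then have d: "dist y (fst a, e) < e" using y by (auto simp: tball_def dist_commute)
    then have P: "y \<in> Pn" using snd_pos_ball[OF d] by (simp add: Pn_def)
    define r where "r = min (e - dist y (fst a, e)) (snd y) / 2"
    have r: "0 < r" "r < snd y" "r \<le> e - dist y (fst a, e)" using P d by (auto simp: r_def Pn_def)
    have "ball y r \<subseteq> tball a e"
    proof
      fix z assume "z \<in> ball y r"
      then have "dist z (fst a, e) < e" using r dist_triangle[of z "(fst a, e)" y] by (simp add: dist_commute)
      then show "z \<in> tball a e" by (simp add: tball_def dist_commute)
    qed
    moreover have "basic_nbhd A y (ball y r)" using P r unfolding basic_nbhd_def by blast
    ultimately show ?thesis by blast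
  qed
qed

lemma Ln_point_near: assumes "a \<in> Ln" "r > 0"
  shows "infinite (Ln \<inter> cball a r)"
proof -
  obtain k :: 'a where True by simp
  define f where "f = (\<lambda>t::real. (fst a + t *\<^sub>R axis k 1, 0::real))"
  have "inj_on f {0<..<r}"
  proof (rule inj_onI)
    fix x y assume "f x = f y"
    then have "(fst a + x *\<^sub>R axis k 1) $ k = (fst a + y *\<^sub>R axis k 1) $ k" by (simp add: f_def)
    then show "x = y" by (simp add: axis_def)
  qed
  then have "infinite (f ` {0<..<r})" using assms(2) by (simp add: finite_image_iff)
  moreover have "f ` {0<..<r} \<subseteq> Ln \<inter> cball a r"
  proof
    fix z assume "z \<in> f ` {0<..<r}"
    then obtain t where t: "0 < t" "t < r" "z = f t" by auto
    have "dist a z = t" using assms(1) t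
      by (cases a) (simp add: f_def Ln_def dist_Pair_Pair dist_norm)
    then show "z \<in> Ln \<inter> cball a r" using t by (simp add: f_def Ln_def)
  qed
  ultimately show ?thesis using finite_subset by blast
qed

lemma closed_Ln: "closed Ln"
  unfolding Ln_def by (intro closed_Collect_eq continuous_intros)

lemma Ln_nonempty: "(0, 0) \<in> Ln" by (simp add: Ln_def)

lemma Ln_closure_minus: assumes "a \<in> Ln" shows "Ln \<subseteq> closure (Ln - {a})"
proof
  fix x :: "(real^'a) \<times> real" assume x: "x \<in> Ln"
  show "x \<in> closure (Ln - {a})"
    unfolding closure_approachable
  proof (intro allI impI)
    fix e :: real assume "e > 0"
    then have "infinite (Ln \<inter> cball x (e/2))" using Ln_point_near[OF x, of "e/2"] by simp
    then obtain y where "y \<in> Ln \<inter> cball x (e/2)" "y \<noteq> a"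
      by (metis finite.simps infinite_remove insert_Diff_single insertCI all_not_in_conv Diff_iff)
    then have "y \<in> Ln - {a}" "dist y x < e" using \<open>e > 0\<close> by (auto simp: dist_commute)
    then show "\<exists>y\<in>Ln - {a}. dist y x < e" by blast
  qed
qed


lemma avoid_countable:
  fixes C :: "real set" assumes "countable C"
  shows "\<exists>G. open G \<and> C \<subseteq> G \<and> uncountable ({0..1} - G)"
proof -
  define f where "f = from_nat_into C"
  define r where "r = (\<lambda>k::nat. (1/2)^k / 8 :: real)"
  define G where "G = (if C = {} then {} else (\<Union>k. ball (f k) (r k)))"
  have rpos: "r k > 0" for k by (simp add: r_def)
  have "open G" by (auto simp: G_def)
  moreover have "C \<subseteq> G"
  proof (cases "C = {}")
    case False
    have "C = range f" using False assms by (simp add: f_def)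
    then show ?thesis using False rpos by (auto simp: G_def)
  qed (simp add: G_def)
  moreover have "uncountable ({0..1} - G)"
  proof
    assume cnt: "countable ({0..1::real} - G)"
    have sumeq: "(\<Sum>k. ennreal (2 * r k)) = ennreal (1/2)"
    proof -
      have s: "summable (\<lambda>k. 2 * r k)" unfolding r_def
        by (intro summable_mult summable_divide) simp
      have e1: "(\<lambda>k. 2 * r k) = (\<lambda>k. (1/2::real)^k / 4)" by (rule ext) (simp add: r_def)
      have "(\<Sum>k. (1/2::real)^k / 4) = (\<Sum>k. (1/2::real)^k) / 4" by (rule suminf_divide) simp
      also have "\<dots> = 1/2" by (simp add: suminf_geometric)
      finally have "(\<Sum>k. 2 * r k) = 1/2" using e1 by simp
      have "(\<Sum>k. ennreal (2 * r k)) = ennreal (\<Sum>k. 2 * r k)"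
        by (intro suminf_ennreal2 s) (simp add: rpos less_imp_le)
      then show ?thesis using \<open>(\<Sum>k. 2 * r k) = 1/2\<close> by simp
    qed
    have mG: "emeasure lborel G \<le> ennreal (1/2)"
    proof (cases "C = {}")
      case True then show ?thesis by (simp add: G_def)
    next
      case False
      have GG: "G = (\<Union>k. ball (f k) (r k))" using False by (simp add: G_def)
      have "emeasure lborel (\<Union>k. ball (f k) (r k)) \<le> (\<Sum>k. emeasure lborel (ball (f k) (r k)))"
        by (rule emeasure_subadditive_countably) auto
      then have "emeasure lborel G \<le> (\<Sum>k. emeasure lborel (ball (f k) (r k)))" using GG by simp
      also have "\<dots> = (\<Sum>k. ennreal (2 * r k))"
      proof -
        have "emeasure lborel (ball (f k) (r k)) = ennreal (2 * r k)" for k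
        proof -
          have "f k - r k \<le> f k + r k" using rpos[of k] by simp
          then have "emeasure lborel (ball (f k) (r k)) = ennreal (f k + r k - (f k - r k))"
            by (simp only: ball_eq_greaterThanLessThan emeasure_lborel_Ioo)
          then show ?thesis by simp
        qed
        then show ?thesis by (simp only:)
      qed
      finally show ?thesis using sumeq by simp
    qed
    have m0: "emeasure lborel ({0..1} - G) = 0"
      using countable_imp_null_set_lborel[OF cnt] by auto
    have GB: "G \<union> ({0..1} - G) \<in> sets lborel" using \<open>open G\<close>
      by (intro sets.Un sets.Diff) (auto simp: borel_open)
    have "emeasure lborel {0..1::real} \<le> emeasure lborel (G \<union> ({0..1} - G))"
      by (rule emeasure_mono[OF _ GB]) auto
    also have "\<dots> \<le> emeasure lborel G + emeasure lborel ({0..1} - G)"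
      using \<open>open G\<close> by (intro emeasure_subadditive) simp_all
    also have "\<dots> \<le> ennreal (1/2)" using mG m0 by simp
    finally have h: "ennreal 1 \<le> ennreal (1/2)" by simp
    have "(1::real) \<le> 1/2" using h by (subst (asm) ennreal_le_iff) simp_all
    then show False by simp
  qed
  ultimately show ?thesis by blast
qed






lemma M_closed: assumes "M \<subseteq> Ln" shows "closedin (tau M) M"
proof -
  have eq: "Xn - M = (Pn \<inter> Xn) \<union> \<Union>((\<lambda>a. tball a 1) ` (Ln - M))"
  proof
    show "Xn - M \<subseteq> (Pn \<inter> Xn) \<union> \<Union>((\<lambda>a. tball a 1) ` (Ln - M))"
      using a_in_tball by (fastforce simp: Xn_def)
    show "(Pn \<inter> Xn) \<union> \<Union>((\<lambda>a. tball a 1) ` (Ln - M)) \<subseteq> Xn - M"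
      using tball_sub_Xn tball_Ln assms PL_disj by fastforce
  qed
  have "open Pn" unfolding Pn_def by (intro open_Collect_less continuous_intros)
  then have "openin (tau M) (Pn \<inter> Xn)" using open_Int_Xn_tau[OF assms] by blast
  moreover have "openin (tau M) (\<Union>((\<lambda>a. tball a 1) ` (Ln - M)))"
    using open_tball[OF assms] by (intro openin_Union) auto
  ultimately have "openin (tau M) (Xn - M)" using eq by auto
  then show ?thesis unfolding closedin_def topspace_tau[OF assms] using assms by (auto simp: Xn_def)
qed

lemma not_perfect:
  fixes M :: "((real^'m) \<times> real) set"
  assumes "countable M" "M \<subseteq> Ln" "Ln \<subseteq> closure M"
  shows "\<not> perfect_top (tau M)"
proof
  assume "perfect_top (tau M)"
  then have "gdelta_in (tau M) M" using M_closed[OF assms(2)] unfolding perfect_top_def by blast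
  then obtain \<U> where U: "countable \<U>" "\<forall>U\<in>\<U>. openin (tau M) U" "Xn \<inter> \<Inter>\<U> = M"
    unfolding gdelta_in_def relative_to_def intersection_of_def topspace_tau[OF assms(2)] by blast
  define V where "V U = {a \<in> Ln. \<exists>e>0. ball a e \<inter> Ln \<subseteq> U}" for U :: "((real^'m) \<times> real) set"
  define \<G> where "\<G> = insert Ln (V ` \<U> \<union> (\<lambda>m. Ln - {m}) ` M)"
  have "Ln \<subseteq> closure (\<Inter>\<G>)"
  proof (rule Baire[OF closed_Ln])
    show "countable \<G>" using U(1) assms(1) by (simp add: \<G>_def)
    fix T assume "T \<in> \<G>"
    then consider "T = Ln" | U where "U \<in> \<U>" "T = V U" | m where "m \<in> M" "T = Ln - {m}"
      by (auto simp: \<G>_def)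
    then show "openin (top_of_set Ln) T \<and> Ln \<subseteq> closure T"
    proof cases
      case 1 then show ?thesis using closure_subset by auto
    next
      case (2 U)
      have MV: "M \<subseteq> V U"
      proof
        fix m assume m: "m \<in> M"
        have "m \<in> U" using U(3) 2 m by blast
        then obtain N where "basic_nbhd M m N" "N \<subseteq> U" using U(2) 2 openin_tau[OF assms(2)] by blast
        moreover have "m \<notin> Pn" using m assms(2) PL_disj by auto
        ultimately obtain e where "e>0" "ball m e \<inter> Xn \<subseteq> U" using m unfolding basic_nbhd_def by blast
        then show "m \<in> V U" using m assms(2) by (auto simp: V_def Xn_def)
      qed
      have "openin (top_of_set Ln) (V U)"
        unfolding openin_euclidean_subtopology_iff
      proof (intro conjI ballI)
        show "V U \<subseteq> Ln" by (auto simp: V_def)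
        fix a assume "a \<in> V U"
        then obtain e where e: "a \<in> Ln" "e>0" "ball a e \<inter> Ln \<subseteq> U" by (auto simp: V_def)
        show "\<exists>e>0. \<forall>x'\<in>Ln. dist x' a < e \<longrightarrow> x' \<in> V U"
        proof (intro exI[of _ "e/2"] conjI ballI impI)
          show "e/2 > 0" using e by simp
          fix x' assume x': "x' \<in> Ln" "dist x' a < e/2"
          then have "ball x' (e/2) \<subseteq> ball a e" by (simp add: ball_subset_ball_iff dist_commute)
          then have "ball x' (e/2) \<inter> Ln \<subseteq> U" using e by blast
          then show "x' \<in> V U" using x' e by (auto simp: V_def intro!: exI[of _ "e/2"])
        qed
      qed
      moreover have "Ln \<subseteq> closure (V U)" using MV closure_mono assms(3) by blast
      ultimately show ?thesis using 2 by simp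
    next
      case (3 m)
      have "openin (top_of_set Ln) (Ln - {m})"
        unfolding openin_open by (intro exI[of _ "- {m}"]) auto
      moreover have "Ln \<subseteq> closure (Ln - {m})" using Ln_closure_minus 3 assms(2) by blast
      ultimately show ?thesis using 3 by simp
    qed
  qed
  moreover have "\<Inter>\<G> = {}"
  proof -
    { fix x assume x: "x \<in> \<Inter>\<G>"
      then have xL: "x \<in> Ln" by (auto simp: \<G>_def)
      have "x \<in> U" if "U \<in> \<U>" for U
      proof -
        have "x \<in> V U" using x that by (auto simp: \<G>_def)
        then obtain e where "e > 0" "ball x e \<inter> Ln \<subseteq> U" by (auto simp: V_def)
        then show ?thesis using xL by auto
      qed
      then have "x \<in> M" using U(3) xL by (auto simp: Xn_def)
      then have False using x by (auto simp: \<G>_def)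
    }
    then show ?thesis by blast
  qed
  ultimately show False using Ln_nonempty by auto
qed

lemma not_Lindelof:
  fixes M :: "((real^'m) \<times> real) set"
  assumes "countable M" "M \<subseteq> Ln"
  shows "\<not> Lindelof_space (tau M)"
proof
  assume L: "Lindelof_space (tau M)"
  obtain i0 :: 'm where True by simp
  let ?p = "\<lambda>x::(real^'m)\<times>real. fst x $ i0"
  obtain G where G: "open G" "?p ` M \<subseteq> G" "uncountable ({0..1} - G)"
    using avoid_countable[of "?p ` M"] assms(1) by auto
  define D :: "((real^'m) \<times> real) set" where "D = (\<lambda>s. (\<chi> i. s, 0::real)) ` ({0..1} - G)"
  have injD: "inj_on (\<lambda>s. ((\<chi> i. s)::real^'m, 0::real)) ({0..1} - G)"
    by (rule inj_onI) (simp add: vec_eq_iff)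
  have uD: "uncountable D" using G(3) injD countable_image_inj_on unfolding D_def by blast
  have DL: "D \<subseteq> Ln" by (auto simp: D_def Ln_def)
  have pD: "?p d \<notin> G" if "d \<in> D" for d using that by (auto simp: D_def)
  have DM: "D \<inter> M = {}" using pD G(2) by blast
  have openc: "openin (tau M) (Xn - D)"
    unfolding openin_tau[OF assms(2)]
  proof (intro conjI ballI)
    show "Xn - D \<subseteq> Xn" by auto
    fix a assume a: "a \<in> Xn - D"
    have "a \<in> Pn \<or> a \<in> M \<or> a \<in> Ln - M" using a by (auto simp: Xn_def)
    then show "\<exists>N. basic_nbhd M a N \<and> N \<subseteq> Xn - D"
    proof (elim disjE)
      assume P: "a \<in> Pn"
      have "basic_nbhd M a (ball a (snd a / 2))" unfolding basic_Pn[OF P assms(2)] using P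
        by (auto simp: Pn_def intro!: exI[of _ "snd a/2"])
      moreover have "ball a (snd a/2) \<subseteq> Xn - D"
        using ball_Pn[OF P, of "snd a / 2"] DL P PL_disj by (auto simp: Xn_def Pn_def)
      ultimately show ?thesis by blast
    next
      assume m: "a \<in> M"
      then have "?p a \<in> G" using G(2) by blast
      then obtain e where e: "e>0" "ball (?p a) e \<subseteq> G" using G(1) open_contains_ball by blast
      have "ball a e \<inter> Xn \<subseteq> Xn - D"
      proof clarify
        fix z assume z: "z \<in> ball a e" "z \<in> Xn" "z \<in> D"
        have "\<bar>?p z - ?p a\<bar> \<le> dist z a"
          using component_le_norm_cart[of "fst z - fst a" i0] dist_fst_le[of z a] by (simp add: dist_norm)
        then have "?p z \<in> G" using e z by (auto simp: dist_real_def dist_commute)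
        then show False using pD z by blast
      qed
      moreover have "basic_nbhd M a (ball a e \<inter> Xn)" using m e unfolding basic_nbhd_def by blast
      ultimately show ?thesis by blast
    next
      assume l: "a \<in> Ln - M"
      have "tball a 1 \<subseteq> Xn - D" using tball_sub_Xn[of a 1] tball_Ln[of a 1] l a DL by blast
      moreover have "basic_nbhd M a (tball a 1)" using l unfolding basic_nbhd_def
        by (intro disjI2 conjI exI[of _ 1]) auto
      ultimately show ?thesis by blast
    qed
  qed
  define \<U> where "\<U> = insert (Xn - D) ((\<lambda>d. tball d 1) ` D)"
  have "openin (tau M) (tball d 1)" if "d \<in> D" for d
  proof -
    have "d \<in> Ln" using DL that by (rule subsetD)
    moreover have "d \<notin> M" using DM that by blast
    ultimately show ?thesis using open_tball[OF assms(2), of d 1] by simp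
  qed
  then have "\<forall>U\<in>\<U>. openin (tau M) U" using openc by (auto simp: \<U>_def)
  moreover have "\<Union>\<U> = topspace (tau M)" unfolding topspace_tau[OF assms(2)]
  proof
    have "tball d 1 \<subseteq> Xn" if "d \<in> D" for d using tball_sub_Xn DL that by blast
    then show "\<Union>\<U> \<subseteq> Xn" unfolding \<U>_def by blast
    show "Xn \<subseteq> \<Union>\<U>"
    proof
      fix z :: "(real^'m) \<times> real" assume z: "z \<in> Xn"
      show "z \<in> \<Union>\<U>"
      proof (cases "z \<in> D")
        case True
        then have "tball z 1 \<in> \<U>" unfolding \<U>_def by blast
        then show ?thesis using a_in_tball[of z 1] by blast
      next
        case False
        then show ?thesis using z unfolding \<U>_def by blast
      qed
    qed
  qed
  ultimately obtain \<V> where V: "countable \<V>" "\<V> \<subseteq> \<U>" "\<Union>\<V> = Xn"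
    using L unfolding Lindelof_space_def topspace_tau[OF assms(2)] by metis
  have "(\<lambda>d. tball d 1) ` D \<subseteq> \<V>"
  proof
    fix W assume "W \<in> (\<lambda>d. tball d 1) ` D"
    then obtain d where d: "d \<in> D" "W = tball d 1" by auto
    then have "d \<in> \<Union>\<V>" using V(3) DL by (auto simp: Xn_def)
    then obtain W' where W': "W' \<in> \<V>" "d \<in> W'" by auto
    then obtain d' where d': "d' \<in> D" "W' = tball d' 1" using V(2) d by (auto simp: \<U>_def)
    then have "d = d'" using tball_Ln[of d' 1] W' DL d by blast
    then show "W \<in> \<V>" using W' d' d by simp
  qed
  then have "countable ((\<lambda>d. tball d 1) ` D)" using V(1) countable_subset by blast
  moreover have "inj_on (\<lambda>d. tball d 1) D"
  proof (rule inj_onI)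
    fix x y assume "x \<in> D" "y \<in> D" "tball x 1 = tball y 1"
    then have "x \<in> tball y 1 \<inter> Ln" using a_in_tball DL by blast
    then show "x = y" using tball_Ln by blast
  qed
  ultimately show False using uD countable_image_inj_on by blast
qed


lemma second_countable_tau:
  fixes M :: "((real^'m) \<times> real) set"
  assumes "countable M" "M \<subseteq> Ln"
  shows "second_countable (tau (Ln - M))"
proof -
  have A: "Ln - M \<subseteq> Ln" by blast
  have LA: "Ln - (Ln - M) = M" using assms(2) by blast
  obtain B :: "((real^'m) \<times> real) set set" where B: "countable B" "\<And>C. C \<in> B \<Longrightarrow> open C"
      "\<And>S. open S \<Longrightarrow> \<exists>U. U \<subseteq> B \<and> S = \<Union>U"
    using univ_second_countable by blast
  define BB where "BB = (\<lambda>C. C \<inter> Xn) ` B \<union> (\<lambda>(m,k). tball m (1 / real (Suc k))) ` (M \<times> (UNIV :: nat set))"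
  have small: "\<exists>C\<in>B. x \<in> C \<and> C \<subseteq> ball x e" if "e > 0" for x :: "(real^'m) \<times> real" and e :: real
  proof -
    obtain W where W: "W \<subseteq> B" "ball x e = \<Union>W" using B(3)[of "ball x e"] by blast
    have "x \<in> ball x e" using that by simp
    then obtain C where "C \<in> W" "x \<in> C" using W(2) by blast
    then show ?thesis using W by blast
  qed
  show ?thesis unfolding second_countable_def
  proof (rule exI[of _ BB], intro conjI)
    show "countable BB" using B(1) assms(1) by (simp add: BB_def)
    show "\<forall>V\<in>BB. openin (tau (Ln - M)) V"
    proof
      fix V assume "V \<in> BB"
      then consider C where "C \<in> B" "V = C \<inter> Xn" | m k where "m \<in> M" "V = tball m (1 / real (Suc k))"
        unfolding BB_def by fastforce
      then show "openin (tau (Ln - M)) V"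
      proof cases
        case 1 then show ?thesis using open_Int_Xn_tau[OF A B(2)] by simp
      next
        case (2 m k)
        have "m \<in> Ln - (Ln - M)" using 2 LA by simp
        then show ?thesis using open_tball[OF A, of m "1 / real (Suc k)"] 2 by simp
      qed
    qed
    show "\<forall>U x. openin (tau (Ln - M)) U \<and> x \<in> U \<longrightarrow> (\<exists>V\<in>BB. x \<in> V \<and> V \<subseteq> U)"
    proof (intro allI impI)
      fix U x assume H: "openin (tau (Ln - M)) U \<and> x \<in> U"
      then obtain N where N: "basic_nbhd (Ln - M) x N" "N \<subseteq> U" using openin_tau[OF A] by blast
      have xX: "x \<in> Xn" using H openin_tau[OF A] by blast
      from xX show "\<exists>V\<in>BB. x \<in> V \<and> V \<subseteq> U"
      proof (cases rule: Xn_cases[where A="Ln - M"])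
        case 1
        obtain e where e: "0 < e" "e < snd x" "N = ball x e" using N(1) basic_Pn[OF 1 A] by blast
        obtain C where C: "C \<in> B" "x \<in> C" "C \<subseteq> ball x e" using small e(1) by blast
        have "C \<inter> Xn \<in> BB" using C(1) unfolding BB_def by blast
        moreover have "x \<in> C \<inter> Xn" using C xX by blast
        moreover have "C \<inter> Xn \<subseteq> U" using C(3) e(3) N(2) by blast
        ultimately show ?thesis by blast
      next
        case 2
        obtain e where e: "0 < e" "N = ball x e \<inter> Xn" using N(1) basic_A[OF 2 A] by blast
        obtain C where C: "C \<in> B" "x \<in> C" "C \<subseteq> ball x e" using small e(1) by blast
        have "C \<inter> Xn \<in> BB" using C(1) unfolding BB_def by blast
        moreover have "x \<in> C \<inter> Xn" using C xX by blast
        moreover have "C \<inter> Xn \<subseteq> U" using C(3) e(2) N(2) by blast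
        ultimately show ?thesis by blast
      next
        case 3
        obtain e where e: "0 < e" "N = tball x e" using N(1) basic_L[OF 3] by blast
        obtain k where k: "inverse (real (Suc k)) < e" using reals_Archimedean e(1) by blast
        have "tball x (1 / real (Suc k)) \<subseteq> tball x e" using k by (intro tball_mono) (simp add: field_simps)
        moreover have "x \<in> M" using 3 LA by simp
        then have "tball x (1 / real (Suc k)) \<in> BB" unfolding BB_def by force
        ultimately show ?thesis using a_in_tball[of x] e(2) N(2) by blast
      qed
    qed
  qed
qed

lemma not_sigma:
  fixes M :: "((real^'m) \<times> real) set"
  assumes "M \<subseteq> Ln" "Ln \<subseteq> closure M"
  shows "\<not> sigma_compact_top (tau (Ln - M))"
proof
  have A: "Ln - M \<subseteq> Ln" by blast
  have LA: "Ln - (Ln - M) = M" using assms(1) by blast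
  assume "sigma_compact_top (tau (Ln - M))"
  then obtain FF where F: "countable FF" "\<forall>K\<in>FF. compactin (tau (Ln - M)) K" "\<Union>FF = Xn"
    unfolding sigma_compact_top_def topspace_tau[OF A] by blast
  have cont: "continuous_map (tau (Ln - M)) (top_of_set Xn) id"
    unfolding continuous_map_def topspace_tau[OF A]
  proof (intro conjI allI impI)
    show "id \<in> Xn \<rightarrow> topspace (top_of_set Xn)" by auto
    fix U :: "((real^'m) \<times> real) set" assume "openin (top_of_set Xn) U"
    then obtain C where C: "open C" "U = Xn \<inter> C" by (auto simp: openin_open)
    then have "{x \<in> Xn. id x \<in> U} = C \<inter> Xn" by auto
    then show "openin (tau (Ln - M)) {x \<in> Xn. id x \<in> U}" using open_Int_Xn_tau[OF A C(1)] by simp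
  qed
  have Kcl: "closed K" if "K \<in> FF" for K
  proof -
    have "compactin (top_of_set Xn) (id ` K)" using image_compactin[OF _ cont] F(2) that by blast
    then have "compact K" by (simp add: compactin_subtopology)
    then show ?thesis by (rule compact_imp_closed)
  qed
  define GG where "GG = insert Ln ((\<lambda>K. Ln - K) ` FF)"
  have "\<exists>K\<in>FF. \<not> Ln \<subseteq> closure (Ln - K)"
  proof (rule ccontr)
    assume H: "\<not> (\<exists>K\<in>FF. \<not> Ln \<subseteq> closure (Ln - K))"
    have "Ln \<subseteq> closure (\<Inter>GG)"
    proof (rule Baire[OF closed_Ln])
      show "countable GG" using F(1) by (simp add: GG_def)
      fix T assume "T \<in> GG"
      then consider "T = Ln" | K where "K \<in> FF" "T = Ln - K" by (auto simp: GG_def)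
      then show "openin (top_of_set Ln) T \<and> Ln \<subseteq> closure T"
      proof cases
        case 1 then show ?thesis using closure_subset by auto
      next
        case (2 K)
        have "open (- K)" using Kcl[OF 2(1)] by (simp add: open_Compl)
        then have "openin (top_of_set Ln) (Ln - K)" unfolding openin_open
          by (intro exI[of _ "- K"]) auto
        then show ?thesis using H 2 by auto
      qed
    qed
    moreover have "\<Inter>GG = {}" using F(3) by (auto simp: GG_def Xn_def)
    ultimately show False using Ln_nonempty by auto
  qed
  then obtain K where K: "K \<in> FF" "\<not> Ln \<subseteq> closure (Ln - K)" by blast
  then obtain x where x: "x \<in> Ln" "x \<notin> closure (Ln - K)" by blast
  then obtain e where e: "e > 0" "\<forall>y\<in>Ln - K. \<not> dist y x < e"
    unfolding closure_approachable by blast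
  have sub: "z \<in> K" if "z \<in> Ln" "dist z x < e" for z using e that by blast
  have "x \<in> closure M" using x assms(2) by blast
  then obtain y where y: "y \<in> M" "dist y x < e" using e(1) closure_approachable by blast
  define d where "d = (e - dist y x) / 2"
  have d: "d > 0" using y by (simp add: d_def)
  have sub2: "z \<in> K" if "z \<in> Ln" "dist y z \<le> d" for z
  proof -
    have "dist z x \<le> dist z y + dist y x" by (rule dist_triangle)
    then have "dist z x < e" using that d by (simp add: d_def dist_commute)
    then show ?thesis using sub that by blast
  qed
  define Ob where "Ob k = (- cball y (d / real (Suc k))) \<inter> Xn" for k :: nat
  define UU where "UU = range Ob \<union> (\<lambda>m. tball m 1) ` M"
  have "\<exists>F. finite F \<and> F \<subseteq> UU \<and> K \<subseteq> \<Union>F"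
  proof -
    have "compactin (tau (Ln - M)) K" using F(2) K(1) by blast
    moreover have "\<forall>U\<in>UU. openin (tau (Ln - M)) U"
    proof
      fix U assume "U \<in> UU"
      then consider k where "U = Ob k" | m where "m \<in> M" "U = tball m 1" unfolding UU_def by blast
      then show "openin (tau (Ln - M)) U"
      proof cases
        case (1 k)
        have "open (- cball y (d / real (Suc k)))" by (simp add: open_Compl)
        then show ?thesis using open_Int_Xn_tau[OF A] 1 by (simp add: Ob_def)
      next
        case (2 m)
        have "m \<in> Ln - (Ln - M)" using 2 LA by simp
        then show ?thesis using open_tball[OF A, of m 1] 2 by simp
      qed
    qed
    moreover have "K \<subseteq> \<Union>UU"
    proof
      fix z assume z: "z \<in> K"
      then have zX: "z \<in> Xn" using F(3) K(1) by blast
      show "z \<in> \<Union>UU"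
      proof (cases "z = y")
        case True
        have "tball y 1 \<in> UU" using y(1) unfolding UU_def by blast
        then show ?thesis using True a_in_tball[of y 1] by blast
      next
        case False
        then have dz: "dist y z > 0" by simp
        then obtain k where k: "inverse (real (Suc k)) < dist y z / d" using reals_Archimedean d by (metis divide_pos_pos)
        then have "d / real (Suc k) < dist y z" using d by (simp add: field_simps)
        then have "z \<in> Ob k" using zX by (simp add: Ob_def)
        then show ?thesis unfolding UU_def by blast
      qed
    qed
    ultimately show ?thesis unfolding compactin_def by blast
  qed
  then obtain F where Ff: "finite F" "F \<subseteq> UU" "K \<subseteq> \<Union>F" by blast
  obtain I where I: "finite I" "F \<inter> range Ob = Ob ` I"
    using finite_subset_image[of "F \<inter> range Ob" Ob UNIV] Ff(1) by auto
  obtain N where N: "I \<subseteq> {..N}" using I(1) finite_nat_iff_bounded_le by blast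
  obtain MF where MF: "finite MF" "MF \<subseteq> M" "F \<inter> (\<lambda>m. tball m 1) ` M = (\<lambda>m. tball m 1) ` MF"
    using finite_subset_image[of "F \<inter> (\<lambda>m. tball m 1) ` M" "\<lambda>m. tball m 1" M] Ff(1) by auto
  define r where "r = d / real (Suc N)"
  have r: "r > 0" "r \<le> d" using d by (auto simp: r_def field_simps)
  have "Ln \<inter> cball y r \<subseteq> MF"
  proof
    fix z assume z: "z \<in> Ln \<inter> cball y r"
    then have "z \<in> K" using sub2 r by auto
    then obtain W where W: "W \<in> F" "z \<in> W" using Ff(3) by blast
    then consider "W \<in> F \<inter> range Ob" | "W \<in> F \<inter> (\<lambda>m. tball m 1) ` M" using Ff(2) unfolding UU_def by blast
    then show "z \<in> MF"
    proof cases
      case 1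
      then obtain k where k: "k \<in> I" "W = Ob k" using I(2) by auto
      then have "dist y z > d / real (Suc k)" using W(2) by (simp add: Ob_def)
      moreover have "k \<le> N" using k N by auto
      then have "d / real (Suc N) \<le> d / real (Suc k)" using d by (intro divide_left_mono) auto
      moreover have "dist y z \<le> r" using z by simp
      ultimately show ?thesis by (simp add: r_def)
    next
      case 2
      then obtain m where m: "m \<in> MF" "W = tball m 1" using MF(3) by auto
      then have "z = m" using tball_Ln[of m 1] W(2) z by blast
      then show ?thesis using m by simp
    qed
  qed
  then have "finite (Ln \<inter> cball y r)" using MF(1) finite_subset by blast
  moreover have "y \<in> Ln" using y assms(1) by blast
  ultimately show False using Ln_point_near[of y r] r by blast
qed


theorem mainTheorem16:
  fixes M :: "((real^'m) \<times> real) set"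
  assumes "countable M" and "M \<subseteq> Ln"
    and "(subtopology euclidean Ln) closure_of M = Ln"
  shows "\<not> perfect_top (tau M) \<and> \<not> Lindelof_space (tau M)
     \<and> second_countable (tau (Ln - M)) \<and> \<not> sigma_compact_top (tau (Ln - M))"
proof -
  have "Ln \<subseteq> closure M"
    using assms(3) closure_of_subtopology[of euclidean Ln M] closure_mono[of "Ln \<inter> M" M] by auto
  then show ?thesis
    using not_perfect[OF assms(1,2)] not_Lindelof[OF assms(1,2)]
      second_countable_tau[OF assms(1,2)] not_sigma[OF assms(2)] by blast
qed

end
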